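(* Let $F$ be a field with $\mathrm{char}\,F\neq 2$, and let $I_n$ be the $F$-algebra defined in the context. (a) If $F$ is totally real, then for every $n\ge1$ and every $\lambda\in F$, every Rota--Baxter operator of weight $\lambda$ on $I_n$ is trivial, i.e. equals $0$ or $-\lambda\,\mathrm{id}$. (b) If $F$ is quadratically closed, then for every $n\ge 2$ and every nonzero $\lambda\in F$ there exists a nontrivial Rota--Baxter operator of weight $\lambda$ on $I_n$ (i.e. one different from $0$ and $-\lambda\,\mathrm{id}$), and for every $n\ge 3$ there exists a nonzero Rota--Baxter operator of weight $0$ on $I_n$.
   Context: $I_n$ denotes the $n$-dimensional (non-associative) algebra over $F$ with basis $e_1,\ldots,e_n$ and multiplication given by $e_n\cdot e_n=2e_n$, $e_n\cdot e_j=e_j$, $e_j\cdot e_j=e_n$ for $j=1,\ldots,n-1$, with all other products of basis elements equal to zero (extended bilinearly). A linear operator $R\colon A\to A$ is a Rota--Baxter operator of weight $\lambda\in F$ if $R(x)R(y)=R(R(x)y+xR(y)+\lambda xy)$ for all $x,y\in A$. The operators $0$ and $-\lambda\,\mathrm{id}$ are always Rota--Baxter operators of weight $\lambda$ and are called trivial. A field $F$ is totally real if $\nu_1^2+\cdots+\nu_t^2=0$ with $\nu_i\in F$ implies $\nu_1=\cdots=\nu_t=0$. A field is quadratically closed if every quadratic equation over it has a solution in it. *)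

theory Defs
  imports Main
begin

definition In_vecs :: "nat \<Rightarrow> (nat \<Rightarrow> 'a::field) set" where
  "In_vecs n = {x. \<forall>i. i \<notin> {1..n} \<longrightarrow> x i = 0}"

definition In_basis :: "nat \<Rightarrow> nat \<Rightarrow> 'a::field" where
  "In_basis i = (\<lambda>k. if k = i then 1 else 0)"

definition In_table :: "nat \<Rightarrow> nat \<Rightarrow> nat \<Rightarrow> (nat \<Rightarrow> 'a::field)" where
  "In_table n i j =
     (if i = n \<and> j = n then (\<lambda>k. 2 * In_basis n k)
      else if i = n \<and> 1 \<le> j \<and> j < n then In_basis j
      else if 1 \<le> i \<and> i < n \<and> j = i then In_basis n
      else (\<lambda>k. 0))"

definition In_mult :: "nat \<Rightarrow> (nat \<Rightarrow> 'a::field) \<Rightarrow> (nat \<Rightarrow> 'a) \<Rightarrow> (nat \<Rightarrow> 'a)" where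
  "In_mult n x y = (\<lambda>k. \<Sum>i\<in>{1..n}. \<Sum>j\<in>{1..n}. x i * y j * In_table n i j k)"

definition In_linear_op :: "nat \<Rightarrow> ((nat \<Rightarrow> 'a::field) \<Rightarrow> (nat \<Rightarrow> 'a)) \<Rightarrow> bool" where
  "In_linear_op n R \<longleftrightarrow>
     (\<forall>x\<in>In_vecs n. R x \<in> In_vecs n) \<and>
     (\<forall>x\<in>In_vecs n. \<forall>y\<in>In_vecs n. R (\<lambda>k. x k + y k) = (\<lambda>k. R x k + R y k)) \<and>
     (\<forall>c. \<forall>x\<in>In_vecs n. R (\<lambda>k. c * x k) = (\<lambda>k. c * R x k))"

definition In_RB :: "nat \<Rightarrow> 'a::field \<Rightarrow> ((nat \<Rightarrow> 'a) \<Rightarrow> (nat \<Rightarrow> 'a)) \<Rightarrow> bool" where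
  "In_RB n lam R \<longleftrightarrow> In_linear_op n R \<and>
     (\<forall>x\<in>In_vecs n. \<forall>y\<in>In_vecs n.
        In_mult n (R x) (R y) =
        R (\<lambda>k. In_mult n (R x) y k + In_mult n x (R y) k + lam * In_mult n x y k))"

definition In_zero_op :: "nat \<Rightarrow> ((nat \<Rightarrow> 'a::field) \<Rightarrow> (nat \<Rightarrow> 'a)) \<Rightarrow> bool" where
  "In_zero_op n R \<longleftrightarrow> (\<forall>x\<in>In_vecs n. R x = (\<lambda>k. 0))"

definition In_trivial_op :: "nat \<Rightarrow> 'a::field \<Rightarrow> ((nat \<Rightarrow> 'a) \<Rightarrow> (nat \<Rightarrow> 'a)) \<Rightarrow> bool" where
  "In_trivial_op n lam R \<longleftrightarrow>
     In_zero_op n R \<or> (\<forall>x\<in>In_vecs n. R x = (\<lambda>k. - lam * x k))"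

definition totally_real_field :: "'a::field itself \<Rightarrow> bool" where
  "totally_real_field _ \<longleftrightarrow>
     (\<forall>(\<nu>::nat \<Rightarrow> 'a) t. (\<Sum>i<t. \<nu> i ^ 2) = 0 \<longrightarrow> (\<forall>i<t. \<nu> i = 0))"

definition quadratically_closed :: "'a::field itself \<Rightarrow> bool" where
  "quadratically_closed _ \<longleftrightarrow>
     (\<forall>a b c :: 'a. a \<noteq> 0 \<longrightarrow> (\<exists>x. a * x ^ 2 + b * x + c = 0))"

end

theory Submission
  imports Defs
begin


definition Dp :: "nat \<Rightarrow> (nat\<Rightarrow>'a::field) \<Rightarrow> (nat\<Rightarrow>'a) \<Rightarrow> 'a" where
  "Dp n x y = (\<Sum>j\<in>{1..<n}. x j * y j)"

lemma mult_formula: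
  assumes n: "1 \<le> n" and x: "x \<in> In_vecs n" and y: "y \<in> In_vecs n"
  shows "In_mult n x y = (\<lambda>k. x n * y k + (x n * y n + Dp n x y) * In_basis n k)"
proof
  fix k
  have split: "{1..n} = insert n {1..<n}" using n by auto
  have A: "(\<Sum>j\<in>{1..n}. x i * y j * In_table n i j k) = x i * y i * In_basis n k"
    if i: "i \<in> {1..<n}" for i
  proof -
    have "(\<Sum>j\<in>{1..n}. x i * y j * In_table n i j k) = (\<Sum>j\<in>{1..<n}. x i * y j * In_table n i j k)"
      unfolding split using i by (simp add: In_table_def)
    also have "\<dots> = (\<Sum>j\<in>{1..<n}. if j = i then x i * y i * In_basis n k else 0)"
      using i by (intro sum.cong) (auto simp: In_table_def)
    also have "\<dots> = x i * y i * In_basis n k" using i by simp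
    finally show ?thesis .
  qed
  have B: "(\<Sum>j\<in>{1..n}. x n * y j * In_table n n j k) =
       2 * x n * y n * In_basis n k + (if k \<in> {1..<n} then x n * y k else 0)"
  proof -
    have "(\<Sum>j\<in>{1..n}. x n * y j * In_table n n j k) = 2 * x n * y n * In_basis n k +
       (\<Sum>j\<in>{1..<n}. x n * y j * In_table n n j k)"
      unfolding split by (simp add: In_table_def)
    also have "(\<Sum>j\<in>{1..<n}. x n * y j * In_table n n j k) = (\<Sum>j\<in>{1..<n}. if k = j then x n * y k else 0)"
      by (intro sum.cong) (auto simp: In_table_def In_basis_def)
    also have "\<dots> = (if k \<in> {1..<n} then x n * y k else 0)" by simp
    finally show ?thesis .
  qed
  have "In_mult n x y k = (\<Sum>j\<in>{1..n}. x n * y j * In_table n n j k) +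
      (\<Sum>i\<in>{1..<n}. \<Sum>j\<in>{1..n}. x i * y j * In_table n i j k)"
    unfolding In_mult_def split by simp
  also have "\<dots> = 2 * x n * y n * In_basis n k + (if k \<in> {1..<n} then x n * y k else 0) +
      (\<Sum>i\<in>{1..<n}. x i * y i * In_basis n k)"
    using A B by simp
  also have "\<dots> = x n * y k + (x n * y n + Dp n x y) * In_basis n k"
    using y n by (auto simp: In_basis_def Dp_def In_vecs_def sum_distrib_right[symmetric] algebra_simps)
  finally show "In_mult n x y k = x n * y k + (x n * y n + Dp n x y) * In_basis n k" .
qed


lemma basis_in: "1 \<le> i \<Longrightarrow> i \<le> n \<Longrightarrow> In_basis i \<in> In_vecs n"
  by (auto simp: In_basis_def In_vecs_def)

lemma vecs_lin: "x \<in> In_vecs n \<Longrightarrow> y \<in> In_vecs n \<Longrightarrow> (\<lambda>k. a * x k + b * y k) \<in> In_vecs n"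
  by (auto simp: In_vecs_def)

lemma lin2:
  assumes "In_linear_op n R" "x \<in> In_vecs n" "y \<in> In_vecs n"
  shows "R (\<lambda>k. a * x k + b * y k) = (\<lambda>k. a * R x k + b * R y k)"
proof -
  have ax: "(\<lambda>k. a * x k) \<in> In_vecs n" "(\<lambda>k. b * y k) \<in> In_vecs n" using assms by (auto simp: In_vecs_def)
  have "R (\<lambda>k. a * x k + b * y k) = (\<lambda>k. R (\<lambda>k. a * x k) k + R (\<lambda>k. b * y k) k)"
  proof -
    have add: "\<forall>x\<in>In_vecs n. \<forall>y\<in>In_vecs n. R (\<lambda>k. x k + y k) = (\<lambda>k. R x k + R y k)"
      using assms(1) unfolding In_linear_op_def by blast
    show ?thesis using add[rule_format, OF ax] by simp
  qed
  also have "\<dots> = (\<lambda>k. a * R x k + b * R y k)"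
    using assms unfolding In_linear_op_def by simp
  finally show ?thesis .
qed

lemma lin3:
  assumes "In_linear_op n R" "x \<in> In_vecs n" "y \<in> In_vecs n" "z \<in> In_vecs n"
  shows "R (\<lambda>k. a * x k + b * y k + c * z k) = (\<lambda>k. a * R x k + b * R y k + c * R z k)"
proof -
  have "R (\<lambda>k. a * x k + b * y k + c * z k) = R (\<lambda>k. 1 * (\<lambda>k. a * x k + b * y k) k + c * z k)"
    by simp
  also have "\<dots> = (\<lambda>k. 1 * R (\<lambda>k. a * x k + b * y k) k + c * R z k)"
    using assms by (intro lin2 vecs_lin) auto
  also have "\<dots> = (\<lambda>k. a * R x k + b * R y k + c * R z k)"
    using assms by (simp add: lin2)
  finally show ?thesis .
qed

lemma lin1:
  assumes "In_linear_op n R" "x \<in> In_vecs n"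
  shows "R (\<lambda>k. a * x k) = (\<lambda>k. a * R x k)"
  using assms unfolding In_linear_op_def by blast

lemma tr_lemma:
  assumes tr: "totally_real_field TYPE('a::field)" and n: "1 \<le> n"
    and eq: "c * c + Dp n w w = (0::'a)"
  shows "c = 0 \<and> (\<forall>j\<in>{1..<n}. w j = 0)"
proof -
  define \<nu> where "\<nu> = (\<lambda>i. if i = 0 then c else w i)"
  have sp: "{..<n} = insert 0 {1..<n}" using n by auto
  have "(\<Sum>i<n. \<nu> i ^ 2) = c * c + Dp n w w"
    unfolding sp Dp_def \<nu>_def by (simp add: power2_eq_square)
  hence "(\<Sum>i<n. \<nu> i ^ 2) = 0" using eq by simp
  hence "\<forall>i<n. \<nu> i = 0" using tr unfolding totally_real_field_def by blast
  thus ?thesis using n unfolding \<nu>_def by (metis atLeastLessThan_iff less_one linorder_not_le not_gr0)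
qed

lemma Dp_comm: "Dp n x y = Dp n y x" unfolding Dp_def by (simp add: mult.commute)

lemma Dp_basis: "Dp n x (In_basis n) = 0" "Dp n (In_basis n) x = 0"
  unfolding Dp_def In_basis_def by auto

lemma Dp_cong: "(\<And>j. 1 \<le> j \<Longrightarrow> j < n \<Longrightarrow> x j = x' j) \<Longrightarrow> Dp n x y = Dp n x' y"
  unfolding Dp_def by (intro sum.cong) auto

lemma Dp_sq: "Dp n (\<lambda>k. U k + c * u k) (\<lambda>k. U k + c * u k) = Dp n U U + 2 * c * Dp n U u + c * c * Dp n u u"
  unfolding Dp_def by (simp add: sum.distrib sum_distrib_left algebra_simps)


lemma partA:
  fixes R :: "(nat \<Rightarrow> 'a::field) \<Rightarrow> nat \<Rightarrow> 'a"
  assumes tr: "totally_real_field TYPE('a)" and two: "(2::'a) \<noteq> 0" and n: "1 \<le> n"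
    and RB: "In_RB n lam R"
  shows "In_trivial_op n lam R"
proof -
  define e :: "nat \<Rightarrow> 'a" where "e = In_basis n"
  have L: "In_linear_op n R" using RB In_RB_def by blast
  have RBeq: "\<And>x y. x \<in> In_vecs n \<Longrightarrow> y \<in> In_vecs n \<Longrightarrow> In_mult n (R x) (R y) =
      R (\<lambda>k. In_mult n (R x) y k + In_mult n x (R y) k + lam * In_mult n x y k)"
    using RB unfolding In_RB_def by blast
  have RV: "\<And>x. x \<in> In_vecs n \<Longrightarrow> R x \<in> In_vecs n" using L unfolding In_linear_op_def by blast
  have eV: "e \<in> In_vecs n" using n by (simp add: e_def basis_in)
  have en: "e n = 1" and ek: "\<And>k. k \<noteq> n \<Longrightarrow> e k = 0" by (auto simp: e_def In_basis_def)
  have M: "\<And>x y. x \<in> In_vecs n \<Longrightarrow> y \<in> In_vecs n \<Longrightarrow>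
      In_mult n x y = (\<lambda>k. x n * y k + (x n * y n + Dp n x y) * e k)"
    using mult_formula n by (simp add: e_def)
  have De: "\<And>x. Dp n x e = 0" "\<And>x. Dp n e x = 0" by (simp_all add: e_def Dp_basis)
  have Vout: "\<And>x k. x \<in> In_vecs n \<Longrightarrow> k \<notin> {1..n} \<Longrightarrow> x k = 0" by (auto simp: In_vecs_def)
  define r where "r = R e"
  define s where "s = r n"
  have rV: "r \<in> In_vecs n" using RV eV r_def by simp
  have rn: "r n = s" by (simp add: s_def)
  define vp where "vp = (\<lambda>x::nat \<Rightarrow> 'a. (\<lambda>k. x k - x n * e k))"
  have vpV: "\<And>x. x \<in> In_vecs n \<Longrightarrow> vp x \<in> In_vecs n"
    using eV by (auto simp: vp_def In_vecs_def)
  have vpn: "\<And>x. vp x n = 0" by (simp add: vp_def en)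
  have Rdec: "\<And>x. x \<in> In_vecs n \<Longrightarrow> R x = (\<lambda>k. R (vp x) k + x n * r k)"
  proof -
    fix x :: "nat \<Rightarrow> 'a" assume x: "x \<in> In_vecs n"
    have "x = (\<lambda>k. 1 * vp x k + x n * e k)" by (simp add: vp_def)
    hence "R x = R (\<lambda>k. 1 * vp x k + x n * e k)" by simp
    also have "\<dots> = (\<lambda>k. 1 * R (vp x) k + x n * R e k)" using lin2[OF L vpV[OF x] eV, of 1 "x n"] by simp
    finally show "R x = (\<lambda>k. R (vp x) k + x n * r k)" by (simp add: r_def)
  qed
  have Dvp: "\<And>x y. Dp n (vp x) y = Dp n x y"
    by (rule Dp_cong) (simp add: vp_def ek)
  have E1: "2*(s*s) + Dp n r r = R r n + (3*s+2*lam)*s"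
  proof -
    have "In_mult n (R e) (R e) = R (\<lambda>k. In_mult n (R e) e k + In_mult n e (R e) k + lam * In_mult n e e k)"
      using RBeq eV by blast
    also have "(\<lambda>k. In_mult n (R e) e k + In_mult n e (R e) k + lam * In_mult n e e k)
        = (\<lambda>k. 1 * r k + (3*s+2*lam) * e k)"
      using eV rV by (simp add: M r_def[symmetric] rn De en fun_eq_iff algebra_simps)
    also have "R (\<lambda>k. 1 * r k + (3*s+2*lam) * e k) = (\<lambda>k. 1 * R r k + (3*s+2*lam) * r k)"
      using lin2[OF L rV eV, of 1 "3*s+2*lam"] by (simp add: r_def)
    finally have X: "In_mult n r r = (\<lambda>k. 1 * R r k + (3*s+2*lam) * r k)" by (simp add: r_def)
    have "In_mult n r r n = R r n + (3*s+2*lam) * s" using X rn by simp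
    thus ?thesis using rV by (simp add: M rn en algebra_simps)
  qed
  have E2: "(\<lambda>k. R u n * r k + (R u n * s + Dp n (R u) r) * e k) = (\<lambda>k. (2 * R u n + Dp n u r) * r k)"
    if u: "u \<in> In_vecs n" "u n = 0" for u
  proof -
    have "In_mult n (R u) (R e) = R (\<lambda>k. In_mult n (R u) e k + In_mult n u (R e) k + lam * In_mult n u e k)"
      using RBeq eV u by blast
    also have "(\<lambda>k. In_mult n (R u) e k + In_mult n u (R e) k + lam * In_mult n u e k)
        = (\<lambda>k. (2 * R u n + Dp n u r) * e k)"
      using eV rV u RV[OF u(1)] by (simp add: M r_def[symmetric] rn De en fun_eq_iff algebra_simps)
    also have "R (\<lambda>k. (2 * R u n + Dp n u r) * e k) = (\<lambda>k. (2 * R u n + Dp n u r) * r k)"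
      using lin1[OF L eV] by (simp add: r_def)
    finally show ?thesis using RV[OF u(1)] rV by (simp add: M r_def[symmetric] rn)
  qed
  have E2a: "(R u n + Dp n u r) * r j = 0" if u: "u \<in> In_vecs n" "u n = 0" and j: "1 \<le> j" "j < n" for u j
  proof -
    have "R u n * r j + (R u n * s + Dp n (R u) r) * e j = (2 * R u n + Dp n u r) * r j"
      using fun_cong[OF E2[OF u], of j] by simp
    thus ?thesis using j ek[of j] by (simp add: algebra_simps)
  qed
  have E2b: "Dp n (R u) r = Dp n u r * s" if u: "u \<in> In_vecs n" "u n = 0" for u
  proof -
    have "R u n * r n + (R u n * s + Dp n (R u) r) * e n = (2 * R u n + Dp n u r) * r n"
      using fun_cong[OF E2[OF u], of n] by simp
    thus ?thesis by (simp add: rn en algebra_simps)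
  qed
  have E3: "s * R v n + s * R v n + Dp n r (R v) = (s+lam) * R v n + R (R v) n + (Dp n r v + R v n) * s"
    if v: "v \<in> In_vecs n" "v n = 0" for v
  proof -
    have RvV: "R v \<in> In_vecs n" using RV v by blast
    have "In_mult n (R e) (R v) = R (\<lambda>k. In_mult n (R e) v k + In_mult n e (R v) k + lam * In_mult n e v k)"
      using RBeq eV v by blast
    also have "(\<lambda>k. In_mult n (R e) v k + In_mult n e (R v) k + lam * In_mult n e v k)
        = (\<lambda>k. (s+lam) * v k + 1 * R v k + (Dp n r v + R v n) * e k)"
      using eV rV v RvV by (simp add: M r_def[symmetric] rn De en fun_eq_iff algebra_simps)
    also have "R (\<lambda>k. (s+lam) * v k + 1 * R v k + (Dp n r v + R v n) * e k)
       = (\<lambda>k. (s+lam) * R v k + 1 * R (R v) k + (Dp n r v + R v n) * r k)"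
      using lin3[OF L v(1) RvV eV, of "s+lam" 1 "Dp n r v + R v n"] by (simp add: r_def)
    finally have X: "In_mult n r (R v) = (\<lambda>k. (s+lam) * R v k + 1 * R (R v) k + (Dp n r v + R v n) * r k)"
      by (simp add: r_def)
    have "In_mult n r (R v) n = (s+lam) * R v n + R (R v) n + (Dp n r v + R v n) * s" using X rn by simp
    thus ?thesis using rV RvV by (simp add: M rn en algebra_simps)
  qed
  have E4: "R u n * R u n + Dp n (R u) (R u) = (2 * Dp n (R u) u + lam * Dp n u u) * s"
    if u: "u \<in> In_vecs n" "u n = 0" for u
  proof -
    have RuV: "R u \<in> In_vecs n" using RV u by blast
    have "In_mult n (R u) (R u) = R (\<lambda>k. In_mult n (R u) u k + In_mult n u (R u) k + lam * In_mult n u u k)"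
      using RBeq u by blast
    also have "(\<lambda>k. In_mult n (R u) u k + In_mult n u (R u) k + lam * In_mult n u u k)
        = (\<lambda>k. R u n * u k + (2 * Dp n (R u) u + lam * Dp n u u) * e k)"
      using u RuV by (simp add: M Dp_comm[of n u "R u"] fun_eq_iff algebra_simps)
    also have "R (\<lambda>k. R u n * u k + (2 * Dp n (R u) u + lam * Dp n u u) * e k)
       = (\<lambda>k. R u n * R u k + (2 * Dp n (R u) u + lam * Dp n u u) * r k)"
      using lin2[OF L u(1) eV] by (simp add: r_def)
    finally have X: "In_mult n (R u) (R u) = (\<lambda>k. R u n * R u k + (2 * Dp n (R u) u + lam * Dp n u u) * r k)" .
    have "In_mult n (R u) (R u) n = R u n * R u n + (2 * Dp n (R u) u + lam * Dp n u u) * s" using X rn by simp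
    thus ?thesis using RuV by (simp add: M en algebra_simps)
  qed
  show ?thesis
  proof (cases "\<forall>j\<in>{1..<n}. r j = 0")
    case True
    have rse: "r = (\<lambda>k. s * e k)"
    proof
      fix k show "r k = s * e k"
        using True rn Vout[OF rV, of k] ek[of k] by (cases "k = n"; cases "1 \<le> k \<and> k < n") (auto simp: en)
    qed
    have Rr: "R r = (\<lambda>k. s * r k)"
    proof -
      have "R r = R (\<lambda>k. s * e k)" using rse by simp
      also have "\<dots> = (\<lambda>k. s * R e k)" using lin1[OF L eV] by simp
      finally show ?thesis by (simp add: r_def)
    qed
    have Drr: "Dp n r r = 0" unfolding Dp_def using True by simp
    have "2*(s*s) = s * s + (3*s+2*lam)*s" using E1 Rr Drr rn by simp
    hence "2 * (s * (s + lam)) = 0" by (simp add: algebra_simps)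
    hence s01: "s = 0 \<or> s = - lam" using two by (simp add: add_eq_0_iff2)
    show ?thesis
    proof (cases "s = 0")
      case s0: True
      have Ru0: "R u = (\<lambda>k. 0)" if u: "u \<in> In_vecs n" "u n = 0" for u
      proof -
        have "R u n * R u n + Dp n (R u) (R u) = 0" using E4[OF u] s0 by simp
        from tr_lemma[OF tr n this] have h: "R u n = 0" "\<forall>j\<in>{1..<n}. R u j = 0" by auto
        show ?thesis
        proof
          fix k show "R u k = 0"
            using h Vout[OF RV[OF u(1)], of k] by (cases "k = n"; cases "1 \<le> k \<and> k < n") auto
        qed
      qed
      have "R x = (\<lambda>k. 0)" if x: "x \<in> In_vecs n" for x
        using Rdec[OF x] Ru0[OF vpV[OF x] vpn] rse s0 by simp
      thus ?thesis unfolding In_trivial_op_def In_zero_op_def by blast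
    next
      case s1: False
      hence sl: "s = - lam" using s01 by simp
      have Ru: "R u = (\<lambda>k. - lam * u k)" if u: "u \<in> In_vecs n" "u n = 0" for u
      proof -
        have "R u n * R u n + Dp n (\<lambda>k. R u k + lam * u k) (\<lambda>k. R u k + lam * u k) = 0"
          using E4[OF u] sl by (simp add: Dp_sq algebra_simps eq_neg_iff_add_eq_0)
        from tr_lemma[OF tr n this] have h: "R u n = 0" "\<forall>j\<in>{1..<n}. R u j + lam * u j = 0" by auto
        show ?thesis
        proof
          fix k show "R u k = - lam * u k"
            using h Vout[OF RV[OF u(1)], of k] Vout[OF u(1), of k] u(2)
            by (cases "k = n"; cases "1 \<le> k \<and> k < n") (auto simp: eq_neg_iff_add_eq_0)
        qed
      qed
      have "R x = (\<lambda>k. - lam * x k)" if x: "x \<in> In_vecs n" for x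
      proof
        fix k
        have h1: "R x k = R (vp x) k + x n * r k" using fun_cong[OF Rdec[OF x], of k] by simp
        have h2: "R (vp x) k = - lam * (x k - x n * e k)"
          using fun_cong[OF Ru[OF vpV[OF x] vpn], of k] by (simp add: vp_def)
        have h3: "r k = s * e k" using rse by simp
        show "R x k = - lam * x k" using h1 h2 h3 sl by (simp add: algebra_simps)
      qed
      thus ?thesis unfolding In_trivial_op_def by blast
    qed
  next
    case False
    then obtain j0 where j0: "j0 \<in> {1..<n}" "r j0 \<noteq> 0" by blast
    have Q: "R u n = - Dp n u r" if u: "u \<in> In_vecs n" "u n = 0" for u
      using E2a[OF u, of j0] j0 by (simp add: eq_neg_iff_add_eq_0)
    have Qg: "R x n = x n * s - Dp n x r" if x: "x \<in> In_vecs n" for x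
      using fun_cong[OF Rdec[OF x], of n] Q[OF vpV[OF x] vpn] Dvp rn by simp
    define d where "d = Dp n r r"
    have d0: "d \<noteq> 0"
    proof
      assume "d = 0"
      hence "0 * 0 + Dp n r r = 0" by (simp add: d_def)
      from tr_lemma[OF tr n this] j0 show False by auto
    qed
    define p where "p = vp r"
    have pV: "p \<in> In_vecs n" and pn: "p n = 0" using vpV[OF rV] vpn by (auto simp: p_def)
    have Dpr: "Dp n p r = d" by (simp add: p_def Dvp d_def)
    have RpV: "R p \<in> In_vecs n" using RV pV by blast
    have Rpn: "R p n = - d" using Q[OF pV pn] Dpr by simp
    have RRp: "R (R p) n = - d * s - d * s" using Qg[OF RpV] E2b[OF pV pn] Dpr Rpn by simp
    have Drp: "Dp n r (R p) = d * s" using E2b[OF pV pn] Dpr Dp_comm[of n r "R p"] by simp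
    have Drp2: "Dp n r p = d" using Dpr Dp_comm[of n r p] by simp
    have "s * (- d) + s * (- d) + d * s = (s+lam) * (- d) + (- d * s - d * s) + (d + - d) * s"
      using E3[OF pV pn] Rpn RRp Drp Drp2 by simp
    hence "(2*s+lam) * d = 0" by (simp add: algebra_simps)
    hence lam2: "lam = - 2 * s" using d0 by (simp add: eq_neg_iff_add_eq_0 add.commute)
    have "2*(s*s) + d = s * s - d + (3*s+2*lam)*s" using E1 Qg[OF rV] rn by (simp add: d_def)
    hence "2 * (s * s + d) = 0" using lam2 by (simp add: algebra_simps)
    hence "s * s + Dp n r r = 0" using two unfolding d_def by (metis mult_eq_0_iff)
    from tr_lemma[OF tr n this] j0 show ?thesis by auto
  qed
qed



lemma Dp_sparse1: "2 \<le> n \<Longrightarrow> (\<forall>j. 1 < j \<and> j < n \<longrightarrow> x j = 0) \<Longrightarrow> Dp n x y = x 1 * y 1"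
  unfolding Dp_def
  by (subst sum.mono_neutral_right[of "{1..<n}" "{1}"]) auto

lemma Dp_sparse2: "3 \<le> n \<Longrightarrow> (\<forall>j. 2 < j \<and> j < n \<longrightarrow> x j = 0) \<Longrightarrow> Dp n x y = x 1 * y 1 + x 2 * y 2"
  unfolding Dp_def
  by (subst sum.mono_neutral_right[of "{1..<n}" "{1,2}"]) auto

lemma partB1:
  fixes lam i :: "'a::field"
  assumes n: "2 \<le> n" and lam: "lam \<noteq> 0" and i: "i * i = -1"
  shows "\<exists>R. In_RB n lam R \<and> \<not> In_trivial_op n lam R"
proof -
  have ii: "\<And>z. i * (i * z) = - z" using i by (metis mult.assoc mult_minus_left mult_1)
  define w :: "nat \<Rightarrow> 'a" where "w = (\<lambda>k. if k = 1 then - lam else if k = n then i * lam else 0)"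
  define R where "R = (\<lambda>(x::nat \<Rightarrow> 'a) k. x 1 * w k)"
  have wV: "w \<in> In_vecs n" using n by (auto simp: w_def In_vecs_def)
  have RV: "R x \<in> In_vecs n" for x using wV by (auto simp: R_def In_vecs_def)
  have n1: "n \<noteq> 1" "1 \<le> n" using n by auto
  have Dw: "Dp n (R x) (R y) = x 1 * y 1 * (lam * lam)" for x y
    using n by (subst Dp_sparse1) (auto simp: R_def w_def)
  have L: "In_linear_op n R" unfolding In_linear_op_def using RV by (auto simp: R_def fun_eq_iff algebra_simps)
  have "In_mult n (R x) (R y) = R (\<lambda>k. In_mult n (R x) y k + In_mult n x (R y) k + lam * In_mult n x y k)"
    if x: "x \<in> In_vecs n" and y: "y \<in> In_vecs n" for x y
  proof -
    have "In_mult n (R x) (R y) = (\<lambda>k. x 1 * y 1 * (i * lam) * w k)"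
      using RV Dw n1 by (simp add: mult_formula fun_eq_iff) (simp add: R_def w_def algebra_simps ii)
    also have "\<dots> = R (\<lambda>k. In_mult n (R x) y k + In_mult n x (R y) k + lam * In_mult n x y k)"
      using RV x y n1 by (simp add: mult_formula R_def In_basis_def fun_eq_iff) (simp add: w_def algebra_simps)
    finally show ?thesis .
  qed
  hence RB: "In_RB n lam R" using L unfolding In_RB_def by blast
  have b1: "In_basis 1 \<in> In_vecs n" "In_basis n \<in> In_vecs n" using n1 by (auto intro: basis_in)
  have nz: "\<not> In_zero_op n R"
  proof
    assume "In_zero_op n R"
    hence "R (In_basis 1) 1 = 0" using b1 unfolding In_zero_op_def by auto
    thus False using lam by (simp add: R_def w_def In_basis_def)
  qed
  have nl: "\<not> (\<forall>x\<in>In_vecs n. R x = (\<lambda>k. - lam * x k))"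
  proof
    assume "\<forall>x\<in>In_vecs n. R x = (\<lambda>k. - lam * x k)"
    hence "R (In_basis n) n = - lam * In_basis n n" using b1 by auto
    thus False using lam n1 by (simp add: R_def w_def In_basis_def)
  qed
  show ?thesis using RB nz nl unfolding In_trivial_op_def by blast
qed

lemma partB2:
  fixes i :: "'a::field"
  assumes n: "3 \<le> n" and i: "i * i = -1"
  shows "\<exists>R. In_RB n (0::'a) R \<and> \<not> In_zero_op n R"
proof -
  have ii: "\<And>z. i * (i * z) = - z" using i by (metis mult.assoc mult_minus_left mult_1)
  define w :: "nat \<Rightarrow> 'a" where "w = (\<lambda>k. if k = 1 then 1 else if k = 2 then i else 0)"
  define R where "R = (\<lambda>(x::nat \<Rightarrow> 'a) k. (x 1 + i * x 2) * w k)"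
  have wV: "w \<in> In_vecs n" using n by (auto simp: w_def In_vecs_def)
  have RV: "R x \<in> In_vecs n" for x using wV by (auto simp: R_def In_vecs_def)
  have n1: "n \<noteq> 1" "n \<noteq> 2" "1 \<le> n" using n by auto
  have Dw: "Dp n (R x) (R y) = 0" for x y
    using n by (subst Dp_sparse2) (auto simp: R_def w_def algebra_simps ii)
  have Rn: "R x n = 0" for x using n1 by (simp add: R_def w_def)
  have L: "In_linear_op n R" unfolding In_linear_op_def using RV by (auto simp: R_def fun_eq_iff algebra_simps)
  have "In_mult n (R x) (R y) = R (\<lambda>k. In_mult n (R x) y k + In_mult n x (R y) k + 0 * In_mult n x y k)"
    if x: "x \<in> In_vecs n" and y: "y \<in> In_vecs n" for x y
  proof -
    have "In_mult n (R x) (R y) = (\<lambda>k. 0)"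
      using RV Dw Rn n1 by (simp add: mult_formula fun_eq_iff)
    also have "\<dots> = R (\<lambda>k. In_mult n (R x) y k + In_mult n x (R y) k + 0 * In_mult n x y k)"
      using RV x y n1 Rn by (simp add: mult_formula In_basis_def fun_eq_iff) (simp add: R_def w_def algebra_simps ii)
    finally show ?thesis .
  qed
  hence RB: "In_RB n 0 R" using L unfolding In_RB_def by blast
  have b1: "In_basis 1 \<in> In_vecs n" using n1 by (auto intro: basis_in)
  have nz: "\<not> In_zero_op n R"
  proof
    assume "In_zero_op n R"
    hence "R (In_basis 1) 1 = 0" using b1 unfolding In_zero_op_def by auto
    thus False by (simp add: R_def w_def In_basis_def)
  qed
  show ?thesis using RB nz by blast
qed


theorem corollary2:
  assumes char_ne_2: "(2::'a::field) \<noteq> 0"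
  shows "(totally_real_field TYPE('a) \<longrightarrow>
            (\<forall>n\<ge>1. \<forall>lam::'a. \<forall>R. In_RB n lam R \<longrightarrow> In_trivial_op n lam R)) \<and>
         (quadratically_closed TYPE('a) \<longrightarrow>
            (\<forall>n\<ge>2. \<forall>lam::'a. lam \<noteq> 0 \<longrightarrow> (\<exists>R. In_RB n lam R \<and> \<not> In_trivial_op n lam R)) \<and>
            (\<forall>n\<ge>3. \<exists>R. In_RB n (0::'a) R \<and> \<not> In_zero_op n R))"
proof -
  have A: "totally_real_field TYPE('a) \<longrightarrow>
            (\<forall>n\<ge>1. \<forall>lam::'a. \<forall>R. In_RB n lam R \<longrightarrow> In_trivial_op n lam R)"
    using partA char_ne_2 by blast
  have B: "quadratically_closed TYPE('a) \<longrightarrow>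
            (\<forall>n\<ge>2. \<forall>lam::'a. lam \<noteq> 0 \<longrightarrow> (\<exists>R. In_RB n lam R \<and> \<not> In_trivial_op n lam R)) \<and>
            (\<forall>n\<ge>3. \<exists>R. In_RB n (0::'a) R \<and> \<not> In_zero_op n R)"
  proof
    assume qc: "quadratically_closed TYPE('a)"
    obtain i :: 'a where "1 * i ^ 2 + 0 * i + 1 = 0"
      using qc unfolding quadratically_closed_def by (metis one_neq_zero)
    hence i: "i * i = -1" by (simp add: power2_eq_square eq_neg_iff_add_eq_0)
    show "(\<forall>n\<ge>2. \<forall>lam::'a. lam \<noteq> 0 \<longrightarrow> (\<exists>R. In_RB n lam R \<and> \<not> In_trivial_op n lam R)) \<and>
            (\<forall>n\<ge>3. \<exists>R. In_RB n (0::'a) R \<and> \<not> In_zero_op n R)"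
      using partB1[OF _ _ i] partB2[OF _ i] by blast
  qed
  show ?thesis using A B by blast
qed

end
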